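(* For all integers $m\ge 2$ and $n\ge 1$, the stacked prism $Y_{2^m,n}$ is odd prime.
   Context: All graphs are finite and simple. A graph $G$ of order $N$ is odd prime if there is a bijection $\ell:V(G)\to\{1,3,\ldots,2N-1\}$ with $\gcd(\ell(u),\ell(v))=1$ for every edge $uv$. For $k\ge 3$, $n\ge 1$, the stacked prism $Y_{k,n}$ is the Cartesian product $C_k\,\square\,P_n$ of a $k$-cycle and a path on $n$ vertices: vertices $v_{i,j}$ ($1\le i\le n$, $1\le j\le k$), with edges $v_{i,j}v_{i,j+1}$ ($1\le j\le k-1$), $v_{i,k}v_{i,1}$ for each $i$, and $v_{i,j}v_{i+1,j}$ for $1\le i\le n-1$, $1\le j\le k$. *)

theory Defs
  imports Main
begin

definition odd_prime_graph :: "'a set \<Rightarrow> 'a set set \<Rightarrow> bool" where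
  "odd_prime_graph V E \<longleftrightarrow>
     (\<exists>l :: 'a \<Rightarrow> nat.
        bij_betw l V {x. odd x \<and> 1 \<le> x \<and> x \<le> 2 * card V - 1} \<and>
        (\<forall>u v. {u, v} \<in> E \<longrightarrow> gcd (l u) (l v) = 1))"

text \<open>Stacked prism Y_{k,n} = C_k x P_n: vertices (i,j) with 1 \<le> i \<le> n, 1 \<le> j \<le> k.\<close>

definition prism_vertices :: "nat \<Rightarrow> nat \<Rightarrow> (nat \<times> nat) set" where
  "prism_vertices k n = {1..n} \<times> {1..k}"

definition prism_edges :: "nat \<Rightarrow> nat \<Rightarrow> (nat \<times> nat) set set" where
  "prism_edges k n =
     {{(i, j), (i, j + 1)} | i j. 1 \<le> i \<and> i \<le> n \<and> 1 \<le> j \<and> j \<le> k - 1}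
   \<union> {{(i, k), (i, 1)} | i. 1 \<le> i \<and> i \<le> n}
   \<union> {{(i, j), (i + 1, j)} | i j. 1 \<le> i \<and> i \<le> n - 1 \<and> 1 \<le> j \<and> j \<le> k}"

end

theory Submission
  imports Defs
begin
lemma cop2: fixes a b :: nat assumes "odd a" "b = a + 2^t" shows "gcd a b = 1"
proof -
  have "gcd a b = gcd a (2^t)" using assms(2) by (metis gcd_add2)
  moreover have "coprime a (2^t)" using assms(1) by (simp add: coprime_commute[of a] )
  ultimately show ?thesis by simp
qed

lemma cop2s: fixes a b :: nat assumes "odd a \<or> odd b" "b = a + 2^t \<or> a = b + 2^t" shows "gcd a b = 1"
  using assms cop2[of a b t] cop2[of b a t] by (auto simp: gcd.commute)

definition sig :: "nat \<Rightarrow> nat \<Rightarrow> nat" where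
  "sig h j = (if j \<le> h then 2*(j-1) else 4*h - 2*j + 1)"

lemma sig_lt: "1 \<le> j \<Longrightarrow> j \<le> 2*h \<Longrightarrow> sig h j < 2*h"
  unfolding sig_def by auto

lemma sig_inj: "1 \<le> j \<Longrightarrow> j \<le> 2*h \<Longrightarrow> 1 \<le> j' \<Longrightarrow> j' \<le> 2*h \<Longrightarrow> sig h j = sig h j' \<Longrightarrow> j = j'"
  unfolding sig_def by (auto split: if_splits) presburger+

definition lab :: "nat \<Rightarrow> nat \<times> nat \<Rightarrow> nat" where
  "lab h p = 2 * (2*h*(fst p - 1) + sig h (snd p)) + 1"

lemma target: "{x::nat. odd x \<and> 1 \<le> x \<and> x \<le> 2 * N - 1} = (\<lambda>y. 2*y+1) ` {..<N}"
proof (rule set_eqI, rule iffI)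
  fix x assume "x \<in> {x::nat. odd x \<and> 1 \<le> x \<and> x \<le> 2 * N - 1}"
  then have "odd x" "x \<le> 2*N-1" by auto
  then obtain y where "x = 2*y+1" by (metis oddE)
  then show "x \<in> (\<lambda>y. 2*y+1) ` {..<N}" using \<open>x \<le> 2*N-1\<close> by auto
qed auto

lemma divmod_eq: fixes a b a' b' k :: nat
  assumes "b < k" "b' < k" "k*a + b = k*a' + b'" shows "a = a' \<and> b = b'"
proof -
  have "(k*a + b) div k = a" using assms(1) by simp
  moreover have "(k*a' + b') div k = a'" using assms(2) by simp
  ultimately have "a = a'" using assms(3) by simp
  then show ?thesis using assms(3) by simp
qed

lemma main:
  fixes h n :: nat
  assumes h: "h \<ge> 1" and n: "n \<ge> 1" and vert: "\<And>a. odd a \<Longrightarrow> gcd a (a + 4*h) = 1"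
  shows "odd_prime_graph (prism_vertices (2*h) n) (prism_edges (2*h) n)"
  unfolding odd_prime_graph_def
proof (intro exI[of _ "lab h"] conjI allI impI)
  let ?V = "prism_vertices (2*h) n"
  let ?T = "{x::nat. odd x \<and> 1 \<le> x \<and> x \<le> 2 * card ?V - 1}"
  have cV: "card ?V = n * (2*h)" unfolding prism_vertices_def by (simp add: card_cartesian_product)
  have inj: "inj_on (lab h) ?V"
  proof (rule inj_onI)
    fix p q assume p: "p \<in> ?V" and q: "q \<in> ?V" and e: "lab h p = lab h q"
    obtain i j where pij: "p = (i,j)" by fastforce
    obtain i' j' where qij: "q = (i',j')" by fastforce
    have r: "1 \<le> i" "i \<le> n" "1 \<le> j" "j \<le> 2*h" "1 \<le> i'" "i' \<le> n" "1 \<le> j'" "j' \<le> 2*h"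
      using p q pij qij unfolding prism_vertices_def by auto
    have "2*h*(i - 1) + sig h j = 2*h*(i' - 1) + sig h j'" using e pij qij unfolding lab_def by simp
    then have "i - 1 = i' - 1 \<and> sig h j = sig h j'"
      using divmod_eq sig_lt r by blast
    then show "p = q" using sig_inj[of j h j'] r pij qij by auto
  qed
  have sub: "lab h ` ?V \<subseteq> (\<lambda>y. 2*y+1) ` {..<n*(2*h)}"
  proof
    fix x assume "x \<in> lab h ` ?V"
    then obtain i j where r: "1 \<le> i" "i \<le> n" "1 \<le> j" "j \<le> 2*h" and x: "x = lab h (i,j)"
      unfolding prism_vertices_def by auto
    have "sig h j < 2*h" using sig_lt r by blast
    moreover have "2*h*(i-1) + 2*h = 2*h*i" using r by (cases i) auto
    moreover have "2*h*i \<le> n*(2*h)" using r by simp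
    ultimately have "2*h*(i - 1) + sig h j < n*(2*h)" by linarith
    then show "x \<in> (\<lambda>y. 2*y+1) ` {..<n*(2*h)}" using x unfolding lab_def
      by (intro image_eqI[where x="2*h*(i-1)+sig h j"]) auto
  qed
  have fin: "finite ?V" unfolding prism_vertices_def by simp
  have "lab h ` ?V = (\<lambda>y. 2*y+1) ` {..<n*(2*h)}"
  proof (rule card_subset_eq)
    show "card (lab h ` ?V) = card ((\<lambda>y. 2*y+1) ` {..<n*(2*h)})"
      using card_image[OF inj] cV by (simp add: card_image inj_on_def)
  qed (use sub in auto)
  moreover have "?T = (\<lambda>y. 2*y+1) ` {..<n*(2*h)}" unfolding cV by (rule target)
  ultimately show "bij_betw (lab h) ?V ?T" using inj unfolding bij_betw_def by simp
next
  fix u v assume "{u, v} \<in> prism_edges (2*h) n"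
  then consider (hor) i j where "1 \<le> i" "i \<le> n" "1 \<le> j" "j \<le> 2*h - 1" "{u,v} = {(i, j), (i, j + 1)}"
    | (wrap) i where "1 \<le> i" "i \<le> n" "{u,v} = {(i, 2*h), (i, 1)}"
    | (ver) i j where "1 \<le> i" "i \<le> n - 1" "1 \<le> j" "j \<le> 2*h" "{u,v} = {(i, j), (i + 1, j)}"
    unfolding prism_edges_def
    apply (elim UnE CollectE exE conjE)
    subgoal by (simp only:)
    subgoal by (simp only:)
    subgoal by (simp only:)
    done
  then show "gcd (lab h u) (lab h v) = 1"
  proof cases
    case hor
    let ?B = "2 * (2*h*(i - 1)) + 1"
    have o: "odd (lab h (i,j))" unfolding lab_def by simp
    have "lab h (i,j+1) = lab h (i,j) + 2^2 \<or> lab h (i,j+1) = lab h (i,j) + 2^1 \<or> lab h (i,j) = lab h (i,j+1) + 2^2"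
      using hor unfolding lab_def sig_def by auto
    then have "gcd (lab h (i,j)) (lab h (i,j+1)) = 1" using o cop2s by blast
    then show ?thesis using hor(5) by (auto simp: doubleton_eq_iff gcd.commute)
  next
    case wrap
    have o: "odd (lab h (i,1))" unfolding lab_def by simp
    have "lab h (i,2*h) = lab h (i,1) + 2^1"
      using wrap h unfolding lab_def sig_def by auto
    then have "gcd (lab h (i,1)) (lab h (i,2*h)) = 1" using o cop2s by blast
    then show ?thesis using wrap(3) by (auto simp: doubleton_eq_iff gcd.commute)
  next
    case ver
    have o: "odd (lab h (i,j))" unfolding lab_def by simp
    have "lab h (i+1,j) = lab h (i,j) + 4*h"
      using ver unfolding lab_def by (cases i) (auto simp: algebra_simps)
    then have "gcd (lab h (i,j)) (lab h (i+1,j)) = 1" using o vert by simp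
    then show ?thesis using ver(5) by (auto simp: doubleton_eq_iff gcd.commute)
  qed
qed

theorem theorem3p9:
  fixes m n :: nat
  assumes "m \<ge> 2" and "n \<ge> 1"
  shows "odd_prime_graph (prism_vertices (2 ^ m) n) (prism_edges (2 ^ m) n)"
proof -
  define h :: nat where "h = 2 ^ (m - 1)"
  obtain m' where mm: "m = Suc m'" using assms(1) by (cases m) auto
  have k: "(2::nat) ^ m = 2 * h" unfolding h_def mm by simp
  have h1: "h \<ge> 1" unfolding h_def by simp
  have "4 * h = (2::nat) ^ (m + 1)" using k by simp
  then have vert: "\<And>a. odd a \<Longrightarrow> gcd a (a + 4*h) = 1" using cop2 by metis
  show ?thesis unfolding k using main[OF h1 assms(2) vert] by blast
qed

end
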